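(* Let $r=d$ and $\sigma_t(x)=I$ for all $t,x$, and assume condition $(\mathcal T)_2$ holds for some $\lambda_A>0$. Let $\overline Y_{s,t}(x)\in\mathbb R^d$ be a stochastic process adapted to the filtration of $W$, and let $\overline X_{s,t}(x)$ solve $d\overline X_{s,t}(x)=\overline Y_{s,t}(x)dt+dW_t$, $\overline X_{s,s}(x)=x$. Then for any $1\le n\le\infty$, all $s\le t$ and $x\in\mathbb R^d$, $$\mathbb E\big[\|X_{s,t}(x)-\overline X_{s,t}(x)\|^n\big]^{1/n}\le\int_s^te^{-\lambda_A(t-u)}\,\mathbb E\big[\|b_u(\overline X_{s,u}(x))-\overline Y_{s,u}(x)\|^n\big]^{1/n}du.$$
   Context: $W_t$ is a $d$-dimensional Brownian motion; $b_t:\mathbb R^d\to\mathbb R^d$ has continuous derivatives in $x$ up to order three, uniformly bounded in $(t,x)$, and is smooth in $t$. $X_{s,t}(x)$ solves $dX_{s,t}(x)=b_t(X_{s,t}(x))dt+dW_t$, $X_{s,s}(x)=x$. Condition $(\mathcal T)_2$ (here with constant diffusion): $\nabla b_t(x)+\nabla b_t(x)'\le-2\lambda_AI$ for all $t,x$, where $(\nabla b)_{i,k}=\partial_{x_i}b^k$. $\|\cdot\|$ is the Euclidean norm; for $n=\infty$, $\mathbb E[\|Z\|^n]^{1/n}$ is read as the essential supremum of $\|Z\|$. *)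

theory Defs
  imports "HOL-Probability.Probability"
begin

definition Lp_norm :: "'a measure \<Rightarrow> ennreal \<Rightarrow> ('a \<Rightarrow> 'b::real_normed_vector) \<Rightarrow> ennreal" where
  "Lp_norm M p Z =
     (if p = \<infinity> then esssup M (\<lambda>\<omega>. ennreal (norm (Z \<omega>)))
      else (let I = (\<integral>\<^sup>+ \<omega>. ennreal (norm (Z \<omega>) powr enn2real p) \<partial>M)
            in if I = \<infinity> then \<infinity> else ennreal (enn2real I powr (1 / enn2real p))))"

definition brownian_motion :: "'a measure \<Rightarrow> (real \<Rightarrow> 'a \<Rightarrow> 'd::euclidean_space) \<Rightarrow> bool" where
  "brownian_motion M W \<longleftrightarrow>
     prob_space M \<and>
     (\<forall>t. W t \<in> borel_measurable M) \<and>
     (AE \<omega> in M. W 0 \<omega> = 0) \<and>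
     (AE \<omega> in M. continuous_on {0..} (\<lambda>t. W t \<omega>)) \<and>
     (\<forall>s t. 0 \<le> s \<longrightarrow> s < t \<longrightarrow>
        distributed M lborel (\<lambda>\<omega>. W t \<omega> - W s \<omega>)
          (\<lambda>y. ennreal (\<Prod>i\<in>Basis. normal_density 0 (sqrt (t - s)) (y \<bullet> i)))) \<and>
     (\<forall>(ts :: nat \<Rightarrow> real) n. 0 \<le> ts 0 \<longrightarrow> (\<forall>i. ts i < ts (Suc i)) \<longrightarrow>
        prob_space.indep_vars M (\<lambda>_. borel) (\<lambda>i \<omega>. W (ts (Suc i)) \<omega> - W (ts i) \<omega>) {..<n})"

definition natural_filtration :: "'a measure \<Rightarrow> (real \<Rightarrow> 'a \<Rightarrow> 'd::euclidean_space) \<Rightarrow> real \<Rightarrow> 'a measure" where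
  "natural_filtration M W t =
     sigma (space M) (\<Union>u\<in>{0..t}. {W u -` A \<inter> space M | A. A \<in> sets borel})"

definition C3_bounded_derivs :: "(real \<Rightarrow> 'd::euclidean_space \<Rightarrow> 'd) \<Rightarrow> bool" where
  "C3_bounded_derivs b \<longleftrightarrow>
     (\<exists>(D1 :: real \<Rightarrow> 'd \<Rightarrow> 'd \<Rightarrow>\<^sub>L 'd) (D2 :: real \<Rightarrow> 'd \<Rightarrow> 'd \<Rightarrow>\<^sub>L ('d \<Rightarrow>\<^sub>L 'd))
        (D3 :: real \<Rightarrow> 'd \<Rightarrow> 'd \<Rightarrow>\<^sub>L ('d \<Rightarrow>\<^sub>L ('d \<Rightarrow>\<^sub>L 'd))) C.
        (\<forall>t x. (b t has_derivative blinfun_apply (D1 t x)) (at x)) \<and>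
        (\<forall>t x. (D1 t has_derivative blinfun_apply (D2 t x)) (at x)) \<and>
        (\<forall>t x. (D2 t has_derivative blinfun_apply (D3 t x)) (at x)) \<and>
        (\<forall>t. continuous_on UNIV (D3 t)) \<and>
        (\<forall>t x. norm (D1 t x) \<le> C \<and> norm (D2 t x) \<le> C \<and> norm (D3 t x) \<le> C))"

definition smooth_in_time :: "(real \<Rightarrow> 'd::euclidean_space \<Rightarrow> 'd) \<Rightarrow> bool" where
  "smooth_in_time b \<longleftrightarrow>
     (\<forall>x. \<exists>f :: nat \<Rightarrow> real \<Rightarrow> 'd. f 0 = (\<lambda>t. b t x) \<and>
        (\<forall>k t. (f k has_vector_derivative f (Suc k) t) (at t)))"

text \<open>Condition (T)_2 with sigma = I: grad b + (grad b)' \<le> -2 lambda I in the Loewner order,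
  i.e. v . (D b_t(x) v) \<le> - lambda |v|^2 for all v (where D b_t(x) is the Jacobian).\<close>
definition condition_T2 :: "(real \<Rightarrow> 'd::euclidean_space \<Rightarrow> 'd) \<Rightarrow> real \<Rightarrow> bool" where
  "condition_T2 b lam \<longleftrightarrow>
     (\<forall>t x. \<exists>D. (b t has_derivative D) (at x) \<and>
        (\<forall>v. 2 * (v \<bullet> D v) \<le> - 2 * lam * (v \<bullet> v)))"

end

theory Submission
  imports Defs
begin

lemma ring_aux:
  fixes A B E D C1 C2 Cc Ia K :: real
  assumes h1: "A * B = E * D" and h2: "D * (C1 * C2) = C1 * Cc"
  shows "A * (B * (C1 * C2 * Ia + K)) = E * (C1 * Cc * Ia) + E * D * K"
proof -
  have "A * (B * (C1 * C2 * Ia + K)) = (A * B) * (C1 * C2 * Ia) + (A * B) * K" by (simp add: algebra_simps)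
  also have "\<dots> = E * (D * (C1 * C2)) * Ia + E * D * K" unfolding h1 by (simp add: algebra_simps)
  also have "\<dots> = E * (C1 * Cc * Ia) + E * D * K" unfolding h2 by (simp add: algebra_simps)
  finally show ?thesis .
qed

lemma disc_step:
  fixes Z G h :: "real \<Rightarrow> 'd::euclidean_space"
  assumes st: "s < t" and lam: "0 \<le> lam" and al: "0 \<le> al"
    and Gc: "continuous_on {s..t} G"
    and hi: "h integrable_on {s..t}" and hni: "(\<lambda>v. norm (h v)) integrable_on {s..t}"
    and hei: "(\<lambda>v. exp (lam * v) * norm (h v)) integrable_on {s..t}"
    and Z: "\<And>u. u \<in> {s..t} \<Longrightarrow> Z u = integral {s..u} (\<lambda>v. G v + h v)"
    and loc: "\<And>v d. v \<in> {s..t} \<Longrightarrow> 0 \<le> d \<Longrightarrow> norm (Z v + d *\<^sub>R G v) \<le> exp (- lam * d + al * d^2) * norm (Z v)"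
    and eta: "0 \<le> eta"
    and N: "N > 0"
    and unif: "\<And>v v'. v \<in> {s..t} \<Longrightarrow> v' \<in> {s..t} \<Longrightarrow> \<bar>v - v'\<bar> \<le> (t - s) / real N \<Longrightarrow> norm (G v - G v') \<le> eta"
  shows "norm (Z t) \<le> exp (al * ((t - s) / real N) * (t - s)) *
           (exp (lam * ((t - s) / real N)) * (exp (- lam * t) * integral {s..t} (\<lambda>v. exp (lam * v) * norm (h v)))
            + (t - s) * eta)"
proof -
  define d where "d = (t - s) / real N"
  have d0: "0 < d" using st N by (simp add: d_def)
  define u where "u k = s + real k * d" for k :: nat
  define I where "I x = integral {s..x} (\<lambda>v. exp (lam * v) * norm (h v))" for x
  have uN: "u N = t" using N by (simp add: u_def d_def)
  have u_mono: "u k \<le> u k'" if "k \<le> k'" for k k' using that d0 by (simp add: u_def mult_right_mono)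
  have u_in: "u k \<in> {s..t}" if "k \<le> N" for k
    using u_mono[OF that] d0 uN by (auto simp: u_def)
  have Gi: "G integrable_on {s..t}" using Gc by (simp add: integrable_continuous_real)
  have GHi: "(\<lambda>v. G v + h v) integrable_on {s..t}" using Gi hi by (rule integrable_add)
  have claim: "norm (Z (u k)) \<le> exp (al * d^2 * real k) * (exp (lam * d) * exp (- lam * u k) * I (u k) + real k * d * eta)"
    if "k \<le> N" for k
    using that
  proof (induction k)
    case 0
    have "Z (u 0) = 0" using Z[of s] st by (simp add: u_def)
    moreover have "I (u 0) = 0" by (simp add: u_def I_def)
    ultimately show ?case by simp
  next
    case (Suc k)
    define a where "a = u k"
    define c where "c = u (Suc k)"
    have ca: "c = a + d" by (simp add: a_def c_def u_def algebra_simps)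
    have a_in: "a \<in> {s..t}" and c_in: "c \<in> {s..t}" using u_in Suc.prems by (auto simp: a_def c_def)
    have sa: "{s..a} \<subseteq> {s..t}" "{a..c} \<subseteq> {s..t}" "{s..c} \<subseteq> {s..t}" using a_in c_in by auto
    have IH: "norm (Z a) \<le> exp (al * d^2 * real k) * (exp (lam * d) * exp (- lam * a) * I a + real k * d * eta)"
      using Suc by (simp add: a_def)
    have GHac: "(\<lambda>v. G v + h v) integrable_on {a..c}" using integrable_on_subinterval[OF GHi sa(2)] .
    have Gac: "G integrable_on {a..c}" using integrable_on_subinterval[OF Gi sa(2)] .
    have hac: "h integrable_on {a..c}" using integrable_on_subinterval[OF hi sa(2)] .
    have hnac: "(\<lambda>v. norm (h v)) integrable_on {a..c}" using integrable_on_subinterval[OF hni sa(2)] .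
    have heac: "(\<lambda>v. exp (lam * v) * norm (h v)) integrable_on {a..c}" using integrable_on_subinterval[OF hei sa(2)] .
    have Zc: "Z c = Z a + integral {a..c} (\<lambda>v. G v + h v)"
    proof -
      have "integral {s..a} (\<lambda>v. G v + h v) + integral {a..c} (\<lambda>v. G v + h v) = integral {s..c} (\<lambda>v. G v + h v)"
        apply (rule Henstock_Kurzweil_Integration.integral_combine)
        using a_in ca d0 integrable_on_subinterval[OF GHi sa(3)] by auto
      then show ?thesis using Z[OF a_in] Z[OF c_in] by simp
    qed
    have Ic: "I c = I a + integral {a..c} (\<lambda>v. exp (lam * v) * norm (h v))"
      unfolding I_def
      apply (rule Henstock_Kurzweil_Integration.integral_combine[symmetric])
      using a_in ca d0 integrable_on_subinterval[OF hei sa(3)] by auto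
    have Ga: "integral {a..c} G = d *\<^sub>R G a + integral {a..c} (\<lambda>v. G v - G a)"
    proof -
      have "integral {a..c} (\<lambda>v. G v - G a) = integral {a..c} G - integral {a..c} (\<lambda>v. G a)"
        by (rule integral_diff[OF Gac integrable_const_ivl])
      also have "integral {a..c} (\<lambda>v. G a) = d *\<^sub>R G a" using ca d0 by simp
      finally show ?thesis by simp
    qed
    have Gb: "norm (integral {a..c} (\<lambda>v. G v - G a)) \<le> d * eta"
    proof -
      have "norm (integral {a..c} (\<lambda>v. G v - G a)) \<le> integral {a..c} (\<lambda>v. eta)"
        apply (rule integral_norm_bound_integral)
        using Gac apply (rule integrable_diff[OF _ integrable_const_ivl])
         apply (rule integrable_const_ivl)
        apply (rule unif)
        using a_in c_in ca by (auto simp: d_def)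
      then show ?thesis using ca d0 by simp
    qed
    define J where "J = integral {a..c} (\<lambda>v. exp (lam * v) * norm (h v))"
    have J0: "0 \<le> J" unfolding J_def using heac by (intro integral_nonneg) auto
    have hb: "norm (integral {a..c} h) \<le> exp (lam * d) * exp (- lam * c) * J"
    proof -
      have "norm (integral {a..c} h) \<le> integral {a..c} (\<lambda>v. norm (h v))"
        by (rule integral_norm_bound_integral[OF hac hnac]) simp
      also have "\<dots> \<le> integral {a..c} (\<lambda>v. exp (lam * d) * exp (- lam * c) * (exp (lam * v) * norm (h v)))"
      proof (rule integral_le[OF hnac])
        show "(\<lambda>v. exp (lam * d) * exp (- lam * c) * (exp (lam * v) * norm (h v))) integrable_on {a..c}"
          using integrable_cmul[OF heac, of "exp (lam * d) * exp (- lam * c)"] by simp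
        fix v assume v: "v \<in> {a..c}"
        have "0 \<le> lam * (v - a)" using v lam by simp
        then have "0 \<le> lam * d + - lam * c + lam * v" using ca by (simp add: algebra_simps)
        then have one: "1 \<le> exp (lam * d) * exp (- lam * c) * exp (lam * v)"
          unfolding mult_exp_exp by simp
        show "norm (h v) \<le> exp (lam * d) * exp (- lam * c) * (exp (lam * v) * norm (h v))"
          using mult_right_mono[OF one norm_ge_zero[of "h v"]] by (simp add: mult.assoc)
      qed
      also have "\<dots> = exp (lam * d) * exp (- lam * c) * J"
        unfolding J_def by simp
      finally show ?thesis .
    qed
    define E where "E = exp (al * d^2 * real (Suc k))"
    have E1: "1 \<le> E" unfolding E_def using al d0 by simp
    have I0: "0 \<le> I a" unfolding I_def using integrable_on_subinterval[OF hei sa(1)] by (intro integral_nonneg) auto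
    have "norm (Z c) \<le> norm (Z a + d *\<^sub>R G a) + norm (integral {a..c} (\<lambda>v. G v - G a)) + norm (integral {a..c} h)"
    proof -
      have "Z c = (Z a + d *\<^sub>R G a) + integral {a..c} (\<lambda>v. G v - G a) + integral {a..c} h"
        using Zc Ga integral_add[OF Gac hac] by (simp add: algebra_simps)
      moreover have "norm ((Z a + d *\<^sub>R G a) + integral {a..c} (\<lambda>v. G v - G a) + integral {a..c} h)
         \<le> norm (Z a + d *\<^sub>R G a) + norm (integral {a..c} (\<lambda>v. G v - G a)) + norm (integral {a..c} h)"
        using norm_triangle_ineq[of "(Z a + d *\<^sub>R G a) + integral {a..c} (\<lambda>v. G v - G a)" "integral {a..c} h"]
          norm_triangle_ineq[of "Z a + d *\<^sub>R G a" "integral {a..c} (\<lambda>v. G v - G a)"] by linarith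
      ultimately show ?thesis by simp
    qed
    also have "\<dots> \<le> exp (- lam * d + al * d^2) * norm (Z a) + d * eta + exp (lam * d) * exp (- lam * c) * J"
      using loc[OF a_in less_imp_le[OF d0]] Gb hb by linarith
    also have "\<dots> \<le> exp (- lam * d + al * d^2) * (exp (al * d^2 * real k) * (exp (lam * d) * exp (- lam * a) * I a + real k * d * eta))
        + d * eta + exp (lam * d) * exp (- lam * c) * J"
      using mult_left_mono[OF IH, of "exp (- lam * d + al * d^2)"] by simp
    also have "exp (- lam * d + al * d^2) * (exp (al * d^2 * real k) * (exp (lam * d) * exp (- lam * a) * I a + real k * d * eta))
        = E * (exp (lam * d) * exp (- lam * c) * I a) + E * exp (- lam * d) * (real k * d * eta)"
    proof (rule ring_aux)
      show "exp (- lam * d + al * d^2) * exp (al * d^2 * real k) = E * exp (- lam * d)"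
        unfolding E_def mult_exp_exp by (rule arg_cong[where f=exp]) (simp add: algebra_simps)
      show "exp (- lam * d) * (exp (lam * d) * exp (- lam * a)) = exp (lam * d) * exp (- lam * c)"
        unfolding ca mult_exp_exp by (rule arg_cong[where f=exp]) (simp add: algebra_simps)
    qed
    finally have n1: "norm (Z c) \<le> E * (exp (lam * d) * exp (- lam * c) * I a) + E * exp (- lam * d) * (real k * d * eta) + d * eta + exp (lam * d) * exp (- lam * c) * J" .
    have n2: "E * exp (- lam * d) * (real k * d * eta) \<le> E * (real k * d * eta)"
      using E1 lam d0 eta by (intro mult_right_mono) (auto intro!: mult_nonneg_nonneg)
    have n3: "d * eta \<le> E * (d * eta)" using E1 d0 eta mult_right_mono[OF E1, of "d * eta"] by simp
    have n4: "exp (lam * d) * exp (- lam * c) * J \<le> E * (exp (lam * d) * exp (- lam * c) * J)"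
      using mult_right_mono[OF E1, of "exp (lam * d) * exp (- lam * c) * J"] J0 by simp
    have n5: "E * (exp (lam * d) * exp (- lam * c) * I a) + E * (real k * d * eta) + E * (d * eta) + E * (exp (lam * d) * exp (- lam * c) * J)
       = E * (exp (lam * d) * exp (- lam * c) * (I a + J) + real (Suc k) * d * eta)"
      by (simp add: algebra_simps)
    have "norm (Z c) \<le> E * (exp (lam * d) * exp (- lam * c) * (I a + J) + real (Suc k) * d * eta)"
      using n1 n2 n3 n4 n5 by linarith
    then show ?case using Ic by (simp add: c_def E_def J_def)
  qed
  from claim[OF order_refl] have "norm (Z t) \<le> exp (al * d^2 * real N) * (exp (lam * d) * exp (- lam * t) * I t + real N * d * eta)"
    by (simp add: uN)
  moreover have e1: "al * d^2 * real N = al * d * (t - s)" using N by (simp add: d_def power2_eq_square)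
  moreover have e2: "real N * d = t - s" using N by (simp add: d_def)
  ultimately have "norm (Z t) \<le> exp (al * d * (t - s)) * (exp (lam * d) * exp (- lam * t) * I t + (t - s) * eta)"
    by (metis mult.assoc)
  then show ?thesis unfolding d_def[symmetric] I_def by (simp add: mult.assoc)
qed

lemma disc_gronwall:
  fixes Z G h :: "real \<Rightarrow> 'd::euclidean_space"
  assumes st: "s < t" and lam: "0 \<le> lam" and al: "0 \<le> al"
    and Gc: "continuous_on {s..t} G"
    and hi: "h integrable_on {s..t}" and hni: "(\<lambda>v. norm (h v)) integrable_on {s..t}"
    and hei: "(\<lambda>v. exp (lam * v) * norm (h v)) integrable_on {s..t}"
    and Z: "\<And>u. u \<in> {s..t} \<Longrightarrow> Z u = integral {s..u} (\<lambda>v. G v + h v)"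
    and loc: "\<And>v d. v \<in> {s..t} \<Longrightarrow> 0 \<le> d \<Longrightarrow> norm (Z v + d *\<^sub>R G v) \<le> exp (- lam * d + al * d^2) * norm (Z v)"
  shows "norm (Z t) \<le> exp (- lam * t) * integral {s..t} (\<lambda>v. exp (lam * v) * norm (h v))"
proof (rule field_le_epsilon)
  define R where "R = exp (- lam * t) * integral {s..t} (\<lambda>v. exp (lam * v) * norm (h v))"
  fix e :: real assume e: "0 < e"
  define eta where "eta = e / (t - s)"
  have eta: "0 < eta" using e st by (simp add: eta_def)
  have "uniformly_continuous_on {s..t} G" using Gc by (intro compact_uniformly_continuous) auto
  then obtain dd where dd: "dd > 0" and ddp: "\<And>x x'. x \<in> {s..t} \<Longrightarrow> x' \<in> {s..t} \<Longrightarrow> dist x' x < dd \<Longrightarrow> dist (G x') (G x) < eta"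
    unfolding uniformly_continuous_on_def using eta by metis
  obtain N0 :: nat where N0: "(t - s) / dd < real N0" using reals_Archimedean2 by blast
  define B where "B N = exp (al * ((t - s) / real N) * (t - s)) * (exp (lam * ((t - s) / real N)) * R + (t - s) * eta)" for N :: nat
  have lim: "B \<longlonglongrightarrow> exp (al * 0 * (t - s)) * (exp (lam * 0) * R + (t - s) * eta)"
    unfolding B_def by (intro tendsto_intros)
  have "norm (Z t) \<le> R + (t - s) * eta"
  proof (rule LIMSEQ_le_const[OF lim[simplified]], intro exI allI impI)
    fix n assume n: "n \<ge> Suc N0"
    then have npos: "n > 0" by simp
    have "(t - s) / dd < real n" using N0 n by linarith
    then have lt: "(t - s) / real n < dd" using dd npos by (simp add: field_simps)
    show "norm (Z t) \<le> B n" unfolding B_def R_def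
    proof (rule disc_step[OF st lam al Gc hi hni hei Z loc _ npos])
      show "0 \<le> eta" using eta by simp
      fix v v' assume v: "v \<in> {s..t}" "v' \<in> {s..t}" and vv: "\<bar>v - v'\<bar> \<le> (t - s) / real n"
      have "dist (G v) (G v') < eta" using ddp[OF v(2) v(1)] vv lt by (simp add: dist_real_def)
      then show "norm (G v - G v') \<le> eta" by (simp add: dist_norm)
    qed auto
  qed
  then show "norm (Z t) \<le> exp (- lam * t) * integral {s..t} (\<lambda>v. exp (lam * v) * norm (h v)) + e"
    using st by (simp add: R_def eta_def)
qed

lemma loc_ineq:
  fixes z g :: "'d::euclidean_space"
  assumes lam: "0 \<le> lam" and d: "0 \<le> d"
    and zg: "z \<bullet> g \<le> - lam * (norm z)^2" and gL: "norm g \<le> L * norm z"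
  shows "norm (z + d *\<^sub>R g) \<le> exp (- lam * d + (L^2 / 2) * d^2) * norm z"
proof (rule power2_le_imp_le)
  have "(norm (z + d *\<^sub>R g))^2 = (norm z)^2 + 2 * d * (z \<bullet> g) + d^2 * (norm g)^2"
    unfolding power2_norm_eq_inner by (simp add: inner_add_left inner_add_right inner_commute algebra_simps power2_eq_square)
  also have "\<dots> \<le> (norm z)^2 + 2 * d * (- lam * (norm z)^2) + d^2 * (L * norm z)^2"
  proof -
    have "2 * d * (z \<bullet> g) \<le> 2 * d * (- lam * (norm z)^2)" using mult_left_mono[OF zg, of "2 * d"] d by simp
    moreover have "(norm g)^2 \<le> (L * norm z)^2" using gL by (intro power_mono) auto
    then have "d^2 * (norm g)^2 \<le> d^2 * (L * norm z)^2" by (simp add: mult_left_mono)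
    ultimately show ?thesis by linarith
  qed
  also have "\<dots> = (1 + 2 * (- lam * d + (L^2 / 2) * d^2)) * (norm z)^2"
    by (simp add: algebra_simps power2_eq_square)
  also have "\<dots> \<le> exp (2 * (- lam * d + (L^2 / 2) * d^2)) * (norm z)^2"
    by (intro mult_right_mono exp_ge_add_one_self) auto
  also have "\<dots> = (exp (- lam * d + (L^2 / 2) * d^2) * norm z)^2"
    by (simp add: power_mult_distrib exp_double[symmetric] power2_eq_square mult_exp_exp)
  finally show "(norm (z + d *\<^sub>R g))^2 \<le> (exp (- lam * d + (L^2 / 2) * d^2) * norm z)^2" .
  show "0 \<le> exp (- lam * d + (L^2 / 2) * d^2) * norm z" by simp
qed

lemma pathwise:
  fixes b :: "real \<Rightarrow> 'd::euclidean_space \<Rightarrow> 'd" and P Q Y w0 :: "real \<Rightarrow> 'd"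
  assumes st: "s \<le> t" and lam: "0 \<le> lam"
    and mono: "\<And>v x y. (x - y) \<bullet> (b v x - b v y) \<le> - lam * (norm (x - y))^2"
    and lip: "\<And>v x y. norm (b v x - b v y) \<le> L * norm (x - y)"
    and bc: "continuous_on UNIV (\<lambda>p. b (fst p) (snd p))"
    and Pi: "(\<lambda>v. b v (P v)) integrable_on {s..t}"
    and Psol: "\<And>u. u \<in> {s..t} \<Longrightarrow> P u = x + integral {s..u} (\<lambda>v. b v (P v)) + (w0 u - w0 s)"
    and Yi: "Y integrable_on {s..t}"
    and Qsol: "\<And>u. u \<in> {s..t} \<Longrightarrow> Q u = x + integral {s..u} Y + (w0 u - w0 s)"
    and wc: "continuous_on {s..t} w0"
    and hab: "(\<lambda>v. b v (Q v) - Y v) absolutely_integrable_on {s..t}"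
  shows "norm (P t - Q t) \<le> integral {s..t} (\<lambda>v. exp (- lam * (t - v)) * norm (b v (Q v) - Y v))"
proof (cases "s = t")
  case True
  then show ?thesis using Psol[of t] Qsol[of t] by simp
next
  case False
  then have st': "s < t" using st by simp
  define h where "h v = b v (Q v) - Y v" for v
  define G where "G v = b v (P v) - b v (Q v)" for v
  define Z where "Z u = P u - Q u" for u
  have Pc: "continuous_on {s..t} P"
  proof -
    have "continuous_on {s..t} (\<lambda>u. x + integral {s..u} (\<lambda>v. b v (P v)) + (w0 u - w0 s))"
      by (intro continuous_intros indefinite_integral_continuous_1 Pi wc)
    then show ?thesis by (rule continuous_on_eq) (simp add: Psol)
  qed
  have Qc: "continuous_on {s..t} Q"
  proof -
    have "continuous_on {s..t} (\<lambda>u. x + integral {s..u} Y + (w0 u - w0 s))"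
      by (intro continuous_intros indefinite_integral_continuous_1 Yi wc)
    then show ?thesis by (rule continuous_on_eq) (simp add: Qsol)
  qed
  have bPc: "continuous_on {s..t} (\<lambda>v. b v (P v))"
    using continuous_on_compose2[OF bc continuous_on_Pair[OF continuous_on_id Pc]] by simp
  have bQc: "continuous_on {s..t} (\<lambda>v. b v (Q v))"
    using continuous_on_compose2[OF bc continuous_on_Pair[OF continuous_on_id Qc]] by simp
  have Gc: "continuous_on {s..t} G" unfolding G_def by (intro continuous_intros bPc bQc)
  have hi: "h integrable_on {s..t}" using hab unfolding h_def absolutely_integrable_on_def by simp
  have hni: "(\<lambda>v. norm (h v)) integrable_on {s..t}" using hab unfolding h_def absolutely_integrable_on_def by simp
  have hei: "(\<lambda>v. exp (lam * v) * norm (h v)) integrable_on {s..t}"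
  proof -
    have "(\<lambda>v. exp (lam * v) * norm (h v)) absolutely_integrable_on {s..t}"
    proof (rule absolutely_integrable_bounded_measurable_product_real)
      show "(\<lambda>v. exp (lam * v)) \<in> borel_measurable (lebesgue_on {s..t})"
        by (intro continuous_imp_measurable_on_sets_lebesgue continuous_intros) auto
      show "{s..t} \<in> sets lebesgue" by simp
      show "bounded ((\<lambda>v. exp (lam * v)) ` {s..t})"
        by (intro compact_imp_bounded compact_continuous_image continuous_intros) auto
      show "(\<lambda>v. norm (h v)) absolutely_integrable_on {s..t}"
        using absolutely_integrable_norm[OF hab] by (simp add: h_def o_def)
    qed
    then show ?thesis using set_lebesgue_integral_eq_integral(1) by blast
  qed
  have Zi: "Z u = integral {s..u} (\<lambda>v. G v + h v)" if u: "u \<in> {s..t}" for u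
  proof -
    have sub: "{s..u} \<subseteq> {s..t}" using u by auto
    have "Z u = integral {s..u} (\<lambda>v. b v (P v)) - integral {s..u} Y"
      using Psol[OF u] Qsol[OF u] by (simp add: Z_def)
    also have "\<dots> = integral {s..u} (\<lambda>v. b v (P v) - Y v)"
      by (rule integral_diff[symmetric]) (auto intro: integrable_on_subinterval[OF Pi sub] integrable_on_subinterval[OF Yi sub])
    also have "\<dots> = integral {s..u} (\<lambda>v. G v + h v)"
      by (simp add: G_def h_def)
    finally show ?thesis .
  qed
  have loc: "norm (Z v + d *\<^sub>R G v) \<le> exp (- lam * d + (L^2 / 2) * d^2) * norm (Z v)"
    if "v \<in> {s..t}" "0 \<le> d" for v d
    unfolding Z_def G_def
    by (rule loc_ineq[OF lam \<open>0 \<le> d\<close> mono lip])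
  have "norm (Z t) \<le> exp (- lam * t) * integral {s..t} (\<lambda>v. exp (lam * v) * norm (h v))"
    by (rule disc_gronwall[OF st' lam _ Gc hi hni hei Zi loc]) auto
  also have "\<dots> = integral {s..t} (\<lambda>v. exp (- lam * (t - v)) * norm (h v))"
    by (simp add: mult_exp_exp algebra_simps flip: integral_mult_right)
  finally show ?thesis by (simp add: Z_def h_def)
qed

lemma Lp_norm_fin:
  assumes "0 \<le> p"
  shows "Lp_norm M (ennreal p) f =
    (if (\<integral>\<^sup>+ x. ennreal (norm (f x) powr p) \<partial>M) = \<infinity> then \<infinity>
     else ennreal (enn2real (\<integral>\<^sup>+ x. ennreal (norm (f x) powr p) \<partial>M) powr (1 / p)))"
  using assms by (simp add: Lp_norm_def Let_def)

lemma Lp_norm_one: "Lp_norm M 1 f = (\<integral>\<^sup>+ x. ennreal (norm (f x)) \<partial>M)"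
proof (cases "(\<integral>\<^sup>+ x. ennreal (norm (f x)) \<partial>M) = \<infinity>")
  case True
  then show ?thesis by (simp add: Lp_norm_def)
next
  case False
  then show ?thesis by (simp add: Lp_norm_def Let_def enn2real_1 ennreal_enn2real_if)
qed

lemma nn_integral_cmult_real:
  fixes f :: "'a \<Rightarrow> real"
  assumes k: "0 \<le> k" and f: "f \<in> borel_measurable M" and f0: "\<And>x. 0 \<le> f x"
  shows "(\<integral>\<^sup>+x. ennreal (k * f x) \<partial>M) = ennreal k * (\<integral>\<^sup>+x. ennreal (f x) \<partial>M)"
proof -
  have "(\<integral>\<^sup>+x. ennreal (k * f x) \<partial>M) = (\<integral>\<^sup>+x. ennreal k * ennreal (f x) \<partial>M)"
    using k f0 by (intro nn_integral_cong) (simp add: ennreal_mult)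
  also have "\<dots> = ennreal k * (\<integral>\<^sup>+x. ennreal (f x) \<partial>M)"
    using f by (intro nn_integral_cmult) measurable
  finally show ?thesis .
qed

lemma holder:
  fixes a c :: "'a \<Rightarrow> real"
  assumes p: "1 < p" and q: "1 < q" and pq: "1/p + 1/q = 1"
    and am: "a \<in> borel_measurable M" and a0: "\<And>x. 0 \<le> a x"
    and cm: "c \<in> borel_measurable M" and c0: "\<And>x. 0 \<le> c x"
    and A: "(\<integral>\<^sup>+x. ennreal (a x powr q) \<partial>M) = ennreal A" and A0: "0 \<le> A"
  shows "(\<integral>\<^sup>+x. ennreal (a x * c x) \<partial>M) \<le> ennreal (A powr (1/q)) * Lp_norm M (ennreal p) c"
proof -
  have mac: "(\<lambda>x. ennreal (a x * c x)) \<in> borel_measurable M" using am cm by measurable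
  define B where "B = (\<integral>\<^sup>+x. ennreal (c x powr p) \<partial>M)"
  have Lp: "Lp_norm M (ennreal p) c = (if B = \<infinity> then \<infinity> else ennreal (enn2real B powr (1 / p)))"
    unfolding B_def using p c0 by (simp add: Lp_norm_fin)
  show ?thesis
  proof (cases "A = 0")
    case True
    then have "AE x in M. ennreal (a x powr q) = 0"
      using A am by (subst nn_integral_0_iff_AE[symmetric]) auto
    then have "AE x in M. a x = 0" by eventually_elim simp
    then have "(\<integral>\<^sup>+x. ennreal (a x * c x) \<partial>M) = 0"
      by (subst nn_integral_0_iff_AE) (auto elim: eventually_mono intro: mac)
    then show ?thesis by simp
  next
    case Apos: False
    then have Apos: "0 < A" using A0 by simp
    show ?thesis
    proof (cases "B = \<infinity>")
      case True
      then show ?thesis using Apos by (simp add: Lp ennreal_mult_top)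
    next
      case False
      then obtain B' where B': "B = ennreal B'" "0 \<le> B'" by (cases B) auto
      show ?thesis
      proof (cases "B' = 0")
        case True
        then have "AE x in M. ennreal (c x powr p) = 0"
          using B' cm unfolding B_def by (subst nn_integral_0_iff_AE[symmetric]) auto
        then have "AE x in M. c x = 0" by eventually_elim simp
        then have "(\<integral>\<^sup>+x. ennreal (a x * c x) \<partial>M) = 0"
          by (subst nn_integral_0_iff_AE) (auto elim: eventually_mono intro: mac)
        then show ?thesis by simp
      next
        case False
        then have Bpos: "0 < B'" using B' by simp
        define al where "al = A powr (1/q)"
        define be where "be = B' powr (1/p)"
        have al0: "0 < al" and be0: "0 < be" using Apos Bpos by (simp_all add: al_def be_def)
        have alq: "al powr q = A" using Apos q by (simp add: al_def powr_powr)
        have bep: "be powr p = B'" using Bpos p by (simp add: be_def powr_powr)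
        have pw: "a x * c x \<le> (al * be / (q * A)) * a x powr q + (al * be / (p * B')) * c x powr p" for x
        proof -
          have "(a x / al) * (c x / be) \<le> (a x / al) powr q / q + (c x / be) powr p / p"
            using Youngs_inequality[of q p "a x / al" "c x / be"] q p pq a0[of x] c0[of x] al0 be0
            by (simp add: add.commute)
          also have "(a x / al) powr q = a x powr q / A" using a0[of x] al0 alq by (simp add: powr_divide)
          also have "(c x / be) powr p = c x powr p / B'" using c0[of x] be0 bep by (simp add: powr_divide)
          finally have "(a x / al) * (c x / be) \<le> a x powr q / A / q + c x powr p / B' / p" .
          then have "al * be * ((a x / al) * (c x / be)) \<le> al * be * (a x powr q / A / q + c x powr p / B' / p)"
            using al0 be0 by (intro mult_left_mono) auto
          then show ?thesis using al0 be0 by (simp add: field_simps)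
        qed
        have "(\<integral>\<^sup>+x. ennreal (a x * c x) \<partial>M) \<le> (\<integral>\<^sup>+x. ennreal ((al * be / (q * A)) * a x powr q) + ennreal ((al * be / (p * B')) * c x powr p) \<partial>M)"
          using pw al0 be0 Apos Bpos q p by (intro nn_integral_mono) (simp add: ennreal_plus[symmetric] del: ennreal_plus)
        also have "\<dots> = ennreal (al * be / (q * A)) * (\<integral>\<^sup>+x. ennreal (a x powr q) \<partial>M) + ennreal (al * be / (p * B')) * B"
          unfolding B_def using al0 be0 Apos Bpos q p
          apply (subst nn_integral_add)
            apply (use am in measurable)
           apply (use cm in measurable)
          using nn_integral_cmult_real[of "al * be / (q * A)" "\<lambda>x. a x powr q" M]
            nn_integral_cmult_real[of "al * be / (p * B')" "\<lambda>x. c x powr p" M] am cm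
          by simp
        also have "\<dots> = ennreal (al * be / (q * A) * A + al * be / (p * B') * B')"
        proof -
          define k1 where "k1 = al * be / (q * A)"
          define k2 where "k2 = al * be / (p * B')"
          have k: "0 \<le> k1" "0 \<le> k2" using al0 be0 Apos Bpos q p by (simp_all add: k1_def k2_def)
          have "ennreal k1 * ennreal A + ennreal k2 * ennreal B' = ennreal (k1 * A + k2 * B')"
            using k A0 B'(2) by (simp add: ennreal_mult ennreal_plus)
          then show ?thesis using A B' by (simp add: k1_def k2_def)
        qed
        also have "al * be / (q * A) * A + al * be / (p * B') * B' = al * be * (1/p + 1/q)"
          using Apos Bpos q p by (simp add: field_simps)
        also have "\<dots> = al * be" using pq by simp
        also have "ennreal (al * be) = ennreal (A powr (1/q)) * Lp_norm M (ennreal p) c"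
          using B' al0 be0 by (simp add: Lp al_def be_def ennreal_mult)
        finally show ?thesis by simp
      qed
    qed
  qed
qed

lemma esssup_gt_iff:
  fixes f :: "'a \<Rightarrow> ennreal"
  assumes f: "f \<in> borel_measurable M"
  shows "c < esssup M f \<longleftrightarrow> emeasure M {x \<in> space M. c < f x} \<noteq> 0"
proof
  assume "c < esssup M f"
  then show "emeasure M {x \<in> space M. c < f x} \<noteq> 0" using esssup_pos_measure[OF f] by force
next
  assume ne: "emeasure M {x \<in> space M. c < f x} \<noteq> 0"
  show "c < esssup M f"
  proof (rule ccontr)
    assume "\<not> c < esssup M f"
    then have le: "esssup M f \<le> c" by simp
    have "{x \<in> space M. c < f x} \<subseteq> {x \<in> space M. esssup M f < f x}" using le by auto
    then have "emeasure M {x \<in> space M. c < f x} \<le> emeasure M {x \<in> space M. esssup M f < f x}"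
      by (intro emeasure_mono) (use f in measurable)
    then show False using ne esssup_zero_measure[of M f] by simp
  qed
qed

lemma Lp_norm_measurable:
  fixes G :: "'u \<Rightarrow> 'a \<Rightarrow> 'b::{second_countable_topology, real_normed_vector}"
  assumes M: "sigma_finite_measure M"
    and Gm: "(\<lambda>(u, x). G u x) \<in> borel_measurable (S \<Otimes>\<^sub>M M)"
  shows "(\<lambda>u. Lp_norm M n (G u)) \<in> borel_measurable S"
proof (cases "n = \<infinity>")
  case True
  define F where "F u x = ennreal (norm (G u x))" for u x
  have Fm: "(\<lambda>(u, x). F u x) \<in> borel_measurable (S \<Otimes>\<^sub>M M)"
    unfolding F_def using Gm by measurable
  have Fu: "F u \<in> borel_measurable M" if "u \<in> space S" for u
    using measurable_Pair2[OF Fm that] by simp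
  have "(\<lambda>u. esssup M (F u)) \<in> borel_measurable S"
  proof (rule borel_measurableI_greater)
    fix c :: ennreal
    define Q where "Q = {p \<in> space (S \<Otimes>\<^sub>M M). c < F (fst p) (snd p)}"
    have Q: "Q \<in> sets (S \<Otimes>\<^sub>M M)" unfolding Q_def using Fm by measurable
    have em: "(\<lambda>u. emeasure M (Pair u -` Q)) \<in> borel_measurable S"
      by (rule sigma_finite_measure.measurable_emeasure_Pair[OF M Q])
    have "{u \<in> space S. c < esssup M (F u)} = {u \<in> space S. emeasure M (Pair u -` Q) \<noteq> 0}"
    proof (intro Collect_cong conj_cong refl)
      fix u assume u: "u \<in> space S"
      have "Pair u -` Q = {x \<in> space M. c < F u x}" using u by (auto simp: Q_def space_pair_measure)
      then show "(c < esssup M (F u)) = (emeasure M (Pair u -` Q) \<noteq> 0)"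
        using esssup_gt_iff[OF Fu[OF u]] by simp
    qed
    also have "\<dots> \<in> sets S" using em by measurable
    finally show "{u \<in> space S. c < esssup M (F u)} \<in> sets S" .
  qed
  then show ?thesis using True unfolding F_def by (simp add: Lp_norm_def)
next
  case False
  define p where "p = enn2real n"
  have np: "n = ennreal p" "0 \<le> p" using False by (auto simp: p_def ennreal_enn2real_if)
  define I where "I u = (\<integral>\<^sup>+ x. ennreal (norm (G u x) powr p) \<partial>M)" for u
  have Im: "I \<in> borel_measurable S"
    unfolding I_def
    by (rule sigma_finite_measure.borel_measurable_nn_integral[OF M]) (use Gm in measurable)
  have "(\<lambda>u. if I u = \<infinity> then \<infinity> else ennreal (enn2real (I u) powr (1 / p))) \<in> borel_measurable S"
    using Im by measurable
  then show ?thesis using np unfolding I_def by (simp add: Lp_norm_fin)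
qed

lemma main_ineq:
  fixes Z :: "'a \<Rightarrow> real" and G :: "'u \<Rightarrow> 'a \<Rightarrow> real" and w :: "'u \<Rightarrow> real"
  assumes M: "prob_space M" and S: "sigma_finite_measure S"
    and Zm: "Z \<in> borel_measurable M" and Z0: "\<And>x. 0 \<le> Z x"
    and Gm: "(\<lambda>(u, x). G u x) \<in> borel_measurable (S \<Otimes>\<^sub>M M)" and G0: "\<And>u x. 0 \<le> G u x"
    and wm: "w \<in> borel_measurable S" and w0: "\<And>u. 0 \<le> w u"
    and bound: "AE x in M. ennreal (Z x) \<le> (\<integral>\<^sup>+u. ennreal (w u * G u x) \<partial>S)"
    and n: "1 \<le> n"
  shows "Lp_norm M n Z \<le> (\<integral>\<^sup>+u. ennreal (w u) * Lp_norm M n (G u) \<partial>S)"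
proof -
  have Msf: "sigma_finite_measure M" using M by (rule prob_space_imp_sigma_finite)
  interpret P: pair_sigma_finite S M unfolding pair_sigma_finite_def using S Msf by simp
  have Lpm: "(\<lambda>u. Lp_norm M n (G u)) \<in> borel_measurable S"
    by (rule Lp_norm_measurable[OF Msf Gm])
  have Gsec: "G u \<in> borel_measurable M" if "u \<in> space S" for u
    using measurable_Pair2[OF Gm that] by simp
  have Gsec2: "(\<lambda>u. G u x) \<in> borel_measurable S" if "x \<in> space M" for x
    using measurable_Pair1[OF Gm that] by simp
  show ?thesis
  proof (cases "n = \<infinity>")
    case True
    define E where "E u = esssup M (\<lambda>x. ennreal (G u x))" for u
    have LpE: "Lp_norm M n (G u) = E u" for u using True G0 by (simp add: Lp_norm_def E_def)
    have Em: "E \<in> borel_measurable S" using Lpm LpE by simp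
    define B where "B = {p \<in> space (S \<Otimes>\<^sub>M M). E (fst p) < ennreal (G (fst p) (snd p))}"
    have Bs: "B \<in> sets (S \<Otimes>\<^sub>M M)" unfolding B_def using Em Gm by measurable
    have "emeasure (S \<Otimes>\<^sub>M M) B = (\<integral>\<^sup>+u. emeasure M (Pair u -` B) \<partial>S)"
      by (rule sigma_finite_measure.emeasure_pair_measure_alt[OF Msf Bs])
    also have "\<dots> = (\<integral>\<^sup>+u. 0 \<partial>S)"
    proof (rule nn_integral_cong)
      fix u assume u: "u \<in> space S"
      have "Pair u -` B = {x \<in> space M. E u < ennreal (G u x)}"
        using u by (auto simp: B_def space_pair_measure)
      then show "emeasure M (Pair u -` B) = 0"
        using esssup_zero_measure[of M "\<lambda>x. ennreal (G u x)"] by (simp add: E_def)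
    qed
    finally have B0: "emeasure (S \<Otimes>\<^sub>M M) B = 0" by simp
    have "emeasure (S \<Otimes>\<^sub>M M) B = (\<integral>\<^sup>+x. emeasure S ((\<lambda>u. (u, x)) -` B) \<partial>M)"
      by (rule P.emeasure_pair_measure_alt2[OF Bs])
    then have "AE x in M. emeasure S ((\<lambda>u. (u, x)) -` B) = 0"
      using B0 by (subst nn_integral_0_iff_AE[symmetric]) (auto intro!: P.measurable_emeasure_Pair2 Bs)
    then have "AE x in M. ennreal (Z x) \<le> (\<integral>\<^sup>+u. ennreal (w u) * E u \<partial>S)"
      using bound AE_space
    proof (eventually_elim)
      case (elim x)
      have xs: "x \<in> space M" using elim by simp
      have Nx: "(\<lambda>u. (u, x)) -` B = {u \<in> space S. E u < ennreal (G u x)}"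
        using xs by (auto simp: B_def space_pair_measure)
      have Nxs: "(\<lambda>u. (u, x)) -` B \<in> sets S"
        unfolding Nx using Em Gsec2[OF xs] by measurable
      have "AE u in S. \<not> E u < ennreal (G u x)"
        by (rule AE_iff_measurable[OF Nxs, THEN iffD2]) (use elim Nx in auto)
      then have "AE u in S. ennreal (w u * G u x) \<le> ennreal (w u) * E u"
      proof eventually_elim
        case (elim u)
        then show ?case using w0[of u] G0[of u x] by (simp add: ennreal_mult mult_left_mono)
      qed
      then have "(\<integral>\<^sup>+u. ennreal (w u * G u x) \<partial>S) \<le> (\<integral>\<^sup>+u. ennreal (w u) * E u \<partial>S)"
        by (rule nn_integral_mono_AE)
      then show ?case using elim by simp
    qed
    then have "esssup M (\<lambda>x. ennreal (norm (Z x))) \<le> (\<integral>\<^sup>+u. ennreal (w u) * E u \<partial>S)"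
      using Z0 by (intro esssup_I) (auto intro: Zm)
    then show ?thesis using True LpE by (simp add: Lp_norm_def)
  next
    case False
    define p where "p = enn2real n"
    have np: "n = ennreal p" using False by (simp add: p_def ennreal_enn2real_if)
    have p1: "1 \<le> p" using n np by (simp add: ennreal_le_iff[symmetric] del: ennreal_le_iff) 
    have Zn: "norm (Z x) = Z x" "\<bar>Z x\<bar> = Z x" for x using Z0[of x] by simp_all
    have Gn: "norm (G u x) = G u x" "\<bar>G u x\<bar> = G u x" for u x using G0[of u x] by simp_all
    show ?thesis
    proof (cases "p = 1")
      case True
      then have n1: "n = 1" using np by simp
      have "Lp_norm M n Z = (\<integral>\<^sup>+x. ennreal (Z x) \<partial>M)" using n1 by (simp add: Lp_norm_one Zn)
      also have "\<dots> \<le> (\<integral>\<^sup>+x. (\<integral>\<^sup>+u. ennreal (w u * G u x) \<partial>S) \<partial>M)"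
        using bound by (rule nn_integral_mono_AE)
      also have "\<dots> = (\<integral>\<^sup>+u. (\<integral>\<^sup>+x. ennreal (w u * G u x) \<partial>M) \<partial>S)"
        by (rule P.Fubini') (use Gm wm in measurable)
      also have "\<dots> = (\<integral>\<^sup>+u. ennreal (w u) * Lp_norm M n (G u) \<partial>S)"
      proof (rule nn_integral_cong)
        fix u assume u: "u \<in> space S"
        show "(\<integral>\<^sup>+x. ennreal (w u * G u x) \<partial>M) = ennreal (w u) * Lp_norm M n (G u)"
          using nn_integral_cmult_real[OF w0 Gsec[OF u] G0] n1 by (simp add: Lp_norm_one Gn)
      qed
      finally show ?thesis .
    next
      case False
      then have p1': "1 < p" using p1 by simp
      define q where "q = p / (p - 1)"
      have q1: "1 < q" using p1' by (simp add: q_def)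
      have pq: "1/p + 1/q = 1" using p1' by (simp add: q_def field_simps)
      have pq': "(p - 1) * q = p" using p1' by (simp add: q_def)
      define T where "T = (\<integral>\<^sup>+u. ennreal (w u) * Lp_norm M n (G u) \<partial>S)"
      show ?thesis
      proof (cases "T = \<infinity>")
        case True
        then show ?thesis by (simp add: T_def)
      next
        case False
        then obtain tau where tau: "T = ennreal tau" "0 \<le> tau" by (cases T) auto
        define Phi where "Phi K x = min (Z x) (real K)" for K :: nat and x
        have Phi0: "0 \<le> Phi K x" for K x using Z0[of x] by (simp add: Phi_def)
        have Phim: "Phi K \<in> borel_measurable M" for K unfolding Phi_def using Zm by measurable
        define R where "R K = (\<integral>\<^sup>+x. ennreal (Phi K x powr p) \<partial>M)" for K
        have RK: "R K \<le> ennreal (tau powr p)" for K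
        proof -
          have "R K \<le> (\<integral>\<^sup>+x. ennreal (real K powr p) \<partial>M)"
            unfolding R_def using p1 Phi0
            by (intro nn_integral_mono ennreal_leI powr_mono2) (auto simp: Phi_def)
          also have "\<dots> = ennreal (real K powr p)"
            using M by (simp add: prob_space.emeasure_space_1)
          finally have "R K < \<infinity>" by (simp add: le_less_trans)
          then obtain r where r: "R K = ennreal r" "0 \<le> r"
            by (cases "R K") auto
          have "ennreal r = (\<integral>\<^sup>+x. ennreal (Phi K x powr (p - 1) * Phi K x) \<partial>M)"
            unfolding r(1)[symmetric] R_def
          proof (rule nn_integral_cong)
            fix x
            have "Phi K x powr (p - 1) * Phi K x = Phi K x powr (p - 1) * Phi K x powr 1"
              using Phi0[of K x] by simp
            also have "\<dots> = Phi K x powr ((p - 1) + 1)" by (simp only: powr_add)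
            also have "\<dots> = Phi K x powr p" by simp
            finally show "ennreal (Phi K x powr p) = ennreal (Phi K x powr (p - 1) * Phi K x)" by simp
          qed
          also have "\<dots> \<le> (\<integral>\<^sup>+x. ennreal (Phi K x powr (p - 1)) * ennreal (Z x) \<partial>M)"
            using Phi0 by (intro nn_integral_mono) (auto simp: ennreal_mult[symmetric] Phi_def intro!: mult_left_mono ennreal_leI)
          also have "\<dots> \<le> (\<integral>\<^sup>+x. ennreal (Phi K x powr (p - 1)) * (\<integral>\<^sup>+u. ennreal (w u * G u x) \<partial>S) \<partial>M)"
            using bound by (intro nn_integral_mono_AE) (auto elim!: eventually_mono intro: mult_left_mono)
          also have "\<dots> = (\<integral>\<^sup>+x. (\<integral>\<^sup>+u. ennreal (w u * (Phi K x powr (p - 1) * G u x)) \<partial>S) \<partial>M)"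
          proof (rule nn_integral_cong)
            fix x assume x: "x \<in> space M"
            have "ennreal (Phi K x powr (p - 1)) * (\<integral>\<^sup>+u. ennreal (w u * G u x) \<partial>S)
               = (\<integral>\<^sup>+u. ennreal (Phi K x powr (p - 1)) * ennreal (w u * G u x) \<partial>S)"
              by (rule nn_integral_cmult[symmetric]) (use wm Gsec2[OF x] in measurable)
            also have "\<dots> = (\<integral>\<^sup>+u. ennreal (w u * (Phi K x powr (p - 1) * G u x)) \<partial>S)"
              using w0 G0 by (intro nn_integral_cong) (simp add: ennreal_mult[symmetric] algebra_simps)
            finally show "ennreal (Phi K x powr (p - 1)) * (\<integral>\<^sup>+u. ennreal (w u * G u x) \<partial>S)
               = (\<integral>\<^sup>+u. ennreal (w u * (Phi K x powr (p - 1) * G u x)) \<partial>S)" .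
          qed
          also have "\<dots> = (\<integral>\<^sup>+u. (\<integral>\<^sup>+x. ennreal (w u * (Phi K x powr (p - 1) * G u x)) \<partial>M) \<partial>S)"
            by (rule P.Fubini') (use Gm wm Phim in measurable)
          also have "\<dots> = (\<integral>\<^sup>+u. ennreal (w u) * (\<integral>\<^sup>+x. ennreal (Phi K x powr (p - 1) * G u x) \<partial>M) \<partial>S)"
          proof (rule nn_integral_cong)
            fix u assume u: "u \<in> space S"
            show "(\<integral>\<^sup>+x. ennreal (w u * (Phi K x powr (p - 1) * G u x)) \<partial>M)
                = ennreal (w u) * (\<integral>\<^sup>+x. ennreal (Phi K x powr (p - 1) * G u x) \<partial>M)"
              by (rule nn_integral_cmult_real[OF w0]) (use Phim Gsec[OF u] G0 in measurable, simp add: G0)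
          qed
          also have "\<dots> \<le> (\<integral>\<^sup>+u. ennreal (w u) * (ennreal (r powr (1/q)) * Lp_norm M n (G u)) \<partial>S)"
          proof (intro nn_integral_mono mult_left_mono)
            fix u assume u: "u \<in> space S"
            have A: "(\<integral>\<^sup>+x. ennreal ((Phi K x powr (p - 1)) powr q) \<partial>M) = ennreal r"
              unfolding r(1)[symmetric] R_def by (simp add: powr_powr pq')
            show "(\<integral>\<^sup>+x. ennreal (Phi K x powr (p - 1) * G u x) \<partial>M) \<le> ennreal (r powr (1/q)) * Lp_norm M n (G u)"
              unfolding np
            proof (rule holder[OF p1' q1 pq _ _ Gsec[OF u] G0 A r(2)])
              show "(\<lambda>x. Phi K x powr (p - 1)) \<in> borel_measurable M"
                by (intro powr_real_measurable Phim measurable_const) simp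
            qed simp
          qed simp
          also have "\<dots> = ennreal (r powr (1/q)) * T"
            unfolding T_def
            by (subst nn_integral_cmult[symmetric]) (use wm Lpm in measurable, simp add: algebra_simps)
          also have "\<dots> = ennreal (r powr (1/q) * tau)" using tau by (simp add: ennreal_mult)
          finally have rr: "r \<le> r powr (1/q) * tau" using tau r by (simp add: ennreal_le_iff)
          have "r \<le> tau powr p"
          proof (cases "r = 0")
            case True then show ?thesis by simp
          next
            case False
            then have r0: "0 < r" using r by simp
            have "r powr (1/p) * r powr (1/q) = r" using pq r0 by (simp flip: powr_add)
            then have "r powr (1/p) * r powr (1/q) \<le> tau * r powr (1/q)" using rr by (simp add: mult.commute)
            then have "r powr (1/p) \<le> tau" using r0 by simp
            then have "(r powr (1/p)) powr p \<le> tau powr p" using p1 r0 by (intro powr_mono2) auto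
            then show ?thesis using p1 r0 by (simp add: powr_powr)
          qed
          then show ?thesis using r by simp
        qed
        have Zp: "ennreal (Z x powr p) = (SUP K. ennreal (Phi K x powr p))" for x
        proof (rule antisym)
          obtain K :: nat where K: "Z x \<le> real K" using real_arch_simple by blast
          have "ennreal (Z x powr p) = ennreal (Phi K x powr p)" using K by (simp add: Phi_def)
          also have "\<dots> \<le> (SUP K. ennreal (Phi K x powr p))" by (rule SUP_upper) simp
          finally show "ennreal (Z x powr p) \<le> (SUP K. ennreal (Phi K x powr p))" .
          show "(SUP K. ennreal (Phi K x powr p)) \<le> ennreal (Z x powr p)"
            using p1 Phi0 by (intro SUP_least ennreal_leI powr_mono2) (auto simp: Phi_def)
        qed
        have "(\<integral>\<^sup>+x. ennreal (Z x powr p) \<partial>M) = (\<integral>\<^sup>+x. (SUP K. ennreal (Phi K x powr p)) \<partial>M)"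
          by (simp add: Zp)
        also have "\<dots> = (SUP K. R K)"
          unfolding R_def
        proof (rule nn_integral_monotone_convergence_SUP)
          show "incseq (\<lambda>K x. ennreal (Phi K x powr p))"
            using p1 Phi0 by (auto simp: incseq_def le_fun_def Phi_def intro!: ennreal_leI powr_mono2)
          show "(\<lambda>x. ennreal (Phi K x powr p)) \<in> borel_measurable M" for K using Phim by measurable
        qed
        also have "\<dots> \<le> ennreal (tau powr p)" by (rule SUP_least) (rule RK)
        finally have Ile: "(\<integral>\<^sup>+x. ennreal (Z x powr p) \<partial>M) \<le> ennreal (tau powr p)" .
        then obtain i where i: "(\<integral>\<^sup>+x. ennreal (Z x powr p) \<partial>M) = ennreal i" "0 \<le> i" "i \<le> tau powr p"
          by (cases "(\<integral>\<^sup>+x. ennreal (Z x powr p) \<partial>M)") (auto simp: ennreal_le_iff top_unique)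
        have "Lp_norm M n Z = ennreal (i powr (1/p))"
          using i p1 by (simp add: np Lp_norm_fin Zn)
        also have "\<dots> \<le> ennreal ((tau powr p) powr (1/p))"
          using i p1 by (intro ennreal_leI powr_mono2) auto
        also have "\<dots> = T" using tau p1 by (simp add: powr_powr)
        finally show ?thesis by (simp add: T_def)
      qed
    qed
  qed
qed

lemma lip_from_C3:
  assumes "C3_bounded_derivs b"
  obtains C where "0 \<le> C" "\<And>v x y. norm (b v x - b v y) \<le> C * norm (x - y)"
proof -
  obtain D1 :: "real \<Rightarrow> 'a \<Rightarrow> 'a \<Rightarrow>\<^sub>L 'a" and C where
    d: "\<And>t x. (b t has_derivative blinfun_apply (D1 t x)) (at x)" and
    bd: "\<And>t x. norm (D1 t x) \<le> C"
    using assms unfolding C3_bounded_derivs_def by metis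
  have C0: "0 \<le> C" using bd[of 0 0] norm_ge_zero[of "D1 0 0"] by linarith
  have "norm (b v x - b v y) \<le> C * norm (x - y)" for v x y
  proof (rule differentiable_bound[of UNIV])
    show "convex (UNIV :: 'a set)" by simp
    show "(b v has_derivative blinfun_apply (D1 v z)) (at z within UNIV)" for z using d by simp
    show "onorm (blinfun_apply (D1 v z)) \<le> C" for z using bd[of v z] by (simp add: norm_blinfun.rep_eq)
  qed auto
  then show ?thesis using that C0 by blast
qed

lemma cont_b:
  fixes b :: "real \<Rightarrow> 'd::euclidean_space \<Rightarrow> 'd"
  assumes lip: "\<And>v x y. norm (b v x - b v y) \<le> C * norm (x - y)" and C0: "0 \<le> C"
    and sm: "smooth_in_time b"
  shows "continuous_on UNIV (\<lambda>p. b (fst p) (snd p))"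
proof -
  have tc: "isCont (\<lambda>t. b t z) r" for z r
  proof -
    obtain f :: "nat \<Rightarrow> real \<Rightarrow> 'd" where f0: "f 0 = (\<lambda>t. b t z)" and fd: "\<And>k t. (f k has_vector_derivative f (Suc k) t) (at t)"
      using sm unfolding smooth_in_time_def by metis
    have "isCont (f 0) r" using fd[of 0 r] by (rule has_vector_derivative_continuous)
    then show ?thesis using f0 by simp
  qed
  show ?thesis
  proof (clarsimp simp: continuous_on_iff)
    fix t0 :: real and x0 :: 'd and e :: real assume e: "0 < e"
    obtain d1 where d1: "d1 > 0" "\<And>t. dist t t0 < d1 \<Longrightarrow> dist (b t x0) (b t0 x0) < e / 2"
      using tc[where z=x0 and r=t0] e unfolding continuous_at_eps_delta by (metis half_gt_zero)
    define d where "d = min d1 (e / (2 * (C + 1)))"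
    have d0: "0 < d" using d1 e C0 by (simp add: d_def)
    show "\<exists>d>0. \<forall>a b'. dist (a, b') (t0, x0) < d \<longrightarrow> dist (b a b') (b t0 x0) < e"
    proof (intro exI conjI allI impI, rule d0)
      fix t x assume dd: "dist (t, x) (t0, x0) < d"
      have dt: "dist t t0 < d1" using dd dist_fst_le[of "(t, x)" "(t0, x0)"] by (simp add: d_def)
      have dx: "dist x x0 < e / (2 * (C + 1))" using dd dist_snd_le[of "(t, x)" "(t0, x0)"] by (simp add: d_def)
      have "dist (b t x) (b t0 x0) \<le> dist (b t x) (b t x0) + dist (b t x0) (b t0 x0)" by (rule dist_triangle)
      also have "dist (b t x) (b t x0) \<le> C * dist x x0" using lip[of t x x0] by (simp add: dist_norm)
      also have "C * dist x x0 \<le> C * (e / (2 * (C + 1)))" using dx C0 by (intro mult_left_mono) auto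
      also have "C * (e / (2 * (C + 1))) \<le> e / 2" using C0 e by (simp add: field_simps)
      finally show "dist (b t x) (b t0 x0) < e" using d1(2)[OF dt] by linarith
    qed
  qed
qed

lemma mono_from_T2:
  fixes b :: "real \<Rightarrow> 'd::euclidean_space \<Rightarrow> 'd"
  assumes T2: "condition_T2 b lam"
  shows "(x - y) \<bullet> (b v x - b v y) \<le> - lam * (norm (x - y))^2"
proof -
  obtain Df where Df: "\<And>t z. (b t has_derivative Df t z) (at z)"
    and Dn: "\<And>t z w. 2 * (w \<bullet> Df t z w) \<le> - 2 * lam * (w \<bullet> w)"
    using T2 unfolding condition_T2_def by metis
  define phi where "phi th = (x - y) \<bullet> b v (y + th *\<^sub>R (x - y))" for th :: real
  have der: "(phi has_derivative (\<lambda>k. (x - y) \<bullet> Df v (y + th *\<^sub>R (x - y)) (k *\<^sub>R (x - y)))) (at th within {0..1})" for th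
  proof -
    have l: "((\<lambda>th. y + th *\<^sub>R (x - y)) has_derivative (\<lambda>k. k *\<^sub>R (x - y))) (at th within {0..1})"
      by (auto intro!: derivative_eq_intros)
    have "((\<lambda>th. b v (y + th *\<^sub>R (x - y))) has_derivative (\<lambda>k. Df v (y + th *\<^sub>R (x - y)) (k *\<^sub>R (x - y)))) (at th within {0..1})"
      using has_derivative_compose[OF l Df] by simp
    then show ?thesis unfolding phi_def by (rule has_derivative_inner_right)
  qed
  obtain th where th: "th \<in> {0..1}" and eq: "phi 1 - phi 0 = (x - y) \<bullet> Df v (y + th *\<^sub>R (x - y)) ((1 - 0) *\<^sub>R (x - y))"
    using mvt_very_simple[of 0 1 phi, OF _ der] by auto
  have "(x - y) \<bullet> (b v x - b v y) = phi 1 - phi 0" by (simp add: phi_def inner_diff_right)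
  also have "\<dots> = (x - y) \<bullet> Df v (y + th *\<^sub>R (x - y)) (x - y)" using eq by simp
  also have "\<dots> \<le> - lam * ((x - y) \<bullet> (x - y))" using Dn[of "x - y" v "y + th *\<^sub>R (x - y)"] by simp
  also have "\<dots> = - lam * (norm (x - y))^2" by (simp add: power2_norm_eq_inner)
  finally show ?thesis .
qed

lemma nat_filt_meas:
  assumes "\<And>u. W u \<in> borel_measurable M"
    and "f \<in> borel_measurable (natural_filtration M W t)"
  shows "f \<in> borel_measurable M"
proof (rule measurable_from_subalg[OF _ assms(2)])
  define A where "A = (\<Union>u\<in>{0..t}. {W u -` B \<inter> space M | B. B \<in> sets borel})"
  have A: "A \<subseteq> sets M" unfolding A_def using assms(1) by (auto intro: measurable_sets)
  then have Ap: "A \<subseteq> Pow (space M)" using sets.sets_into_space by blast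
  show "subalgebra M (natural_filtration M W t)"
    unfolding subalgebra_def natural_filtration_def A_def[symmetric]
    using Ap A by (simp add: sets_measure_of sigma_sets_le_sets_iff[of M A, unfolded])
qed

lemma Lp_norm_norm: "Lp_norm M n (\<lambda>x. norm (f x)) = Lp_norm M n f"
  by (simp add: Lp_norm_def)

lemma Lp_norm_cong_AE:
  fixes f g :: "'a \<Rightarrow> 'b::{real_normed_vector, second_countable_topology}"
  assumes f: "f \<in> borel_measurable M" and g: "g \<in> borel_measurable M" and ae: "AE x in M. f x = g x"
  shows "Lp_norm M n f = Lp_norm M n g"
proof -
  have "esssup M (\<lambda>x. ennreal (norm (f x))) = esssup M (\<lambda>x. ennreal (norm (g x)))"
    by (rule esssup_AE_cong) (use f g ae in \<open>measurable, measurable, auto elim: eventually_mono\<close>)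
  moreover have "(\<integral>\<^sup>+x. ennreal (norm (f x) powr enn2real n) \<partial>M) = (\<integral>\<^sup>+x. ennreal (norm (g x) powr enn2real n) \<partial>M)"
    by (rule nn_integral_cong_AE) (use ae in \<open>auto elim: eventually_mono\<close>)
  ultimately show ?thesis by (simp add: Lp_norm_def)
qed

lemma cara:
  fixes F :: "real \<Rightarrow> 'a \<Rightarrow> 'b::euclidean_space"
  assumes Fm: "\<And>v. F v \<in> borel_measurable M"
    and Fc: "\<And>\<omega> u. \<omega> \<in> space M \<Longrightarrow> s \<le> u \<Longrightarrow> continuous_on {s..u} (\<lambda>v. F v \<omega>)"
  shows "(\<lambda>p. F (max (fst p) s) (snd p)) \<in> borel_measurable (lborel \<Otimes>\<^sub>M M)"
proof (rule borel_measurable_LIMSEQ_metric)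
  define q where "q k u = s + real_of_int \<lfloor>real (Suc k) * (max u s - s)\<rfloor> / real (Suc k)" for k :: nat and u
  show "(\<lambda>p. F (q k (fst p)) (snd p)) \<in> borel_measurable (lborel \<Otimes>\<^sub>M M)" for k
  proof -
    have m1: "(\<lambda>p. F (s + real_of_int i / real (Suc k)) (snd p)) \<in> borel_measurable (lborel \<Otimes>\<^sub>M M)" for i :: int
      using Fm by measurable
    have m2: "(\<lambda>p. \<lfloor>real (Suc k) * (max (fst p) s - s)\<rfloor>) \<in> measurable (lborel \<Otimes>\<^sub>M M) (count_space UNIV)"
      by measurable
    have "(\<lambda>p. (\<lambda>i::int. \<lambda>p. F (s + real_of_int i / real (Suc k)) (snd p)) \<lfloor>real (Suc k) * (max (fst p) s - s)\<rfloor> p)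
        \<in> borel_measurable (lborel \<Otimes>\<^sub>M M)"
      by (rule measurable_compose_countable[where f = "\<lambda>i::int. \<lambda>p. F (s + real_of_int i / real (Suc k)) (snd p)", OF m1 m2])
    then show ?thesis by (simp add: q_def)
  qed
  fix p :: "real \<times> 'a" assume p: "p \<in> space (lborel \<Otimes>\<^sub>M M)"
  obtain u :: real and \<omega> where pu: "p = (u, \<omega>)" and \<omega>: "\<omega> \<in> space M" using p by (cases p) (auto simp: space_pair_measure)
  define m where "m = max u s"
  have qb: "m - 1 / real (Suc k) \<le> q k u \<and> q k u \<le> m" for k
  proof -
    define N where "N = real (Suc k)"
    have N: "0 < N" by (simp add: N_def)
    have f1: "real_of_int \<lfloor>N * (m - s)\<rfloor> \<le> N * (m - s)" by (rule of_int_floor_le)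
    have f2: "N * (m - s) < real_of_int \<lfloor>N * (m - s)\<rfloor> + 1" by (rule real_of_int_floor_add_one_gt)
    have "q k u = s + real_of_int \<lfloor>N * (m - s)\<rfloor> / N" by (simp add: q_def N_def m_def)
    moreover have "real_of_int \<lfloor>N * (m - s)\<rfloor> / N \<le> m - s" using f1 N by (simp add: divide_le_eq mult.commute)
    moreover have "m - s - 1 / N \<le> real_of_int \<lfloor>N * (m - s)\<rfloor> / N"
    proof -
      have "N * (m - s) - 1 \<le> real_of_int \<lfloor>N * (m - s)\<rfloor>" using f2 by linarith
      then have "(N * (m - s) - 1) / N \<le> real_of_int \<lfloor>N * (m - s)\<rfloor> / N" using N by (intro divide_right_mono) simp_all
      moreover have "(N * (m - s) - 1) / N = m - s - 1 / N" using N by (simp add: field_simps)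
      ultimately show ?thesis by simp
    qed
    ultimately show ?thesis by (simp add: N_def)
  qed
  have qs: "s \<le> q k u" for k by (simp add: q_def m_def)
  have lim1: "(\<lambda>k. m - 1 / real (Suc k)) \<longlonglongrightarrow> m"
    using tendsto_diff[OF tendsto_const LIMSEQ_Suc[OF lim_const_over_n[of 1]], of m] by simp
  have limq: "(\<lambda>k. q k u) \<longlonglongrightarrow> m"
    by (rule tendsto_sandwich[OF _ _ lim1 tendsto_const]) (use qb in auto)
  have "(\<lambda>k. F (q k u) \<omega>) \<longlonglongrightarrow> F m \<omega>"
  proof (rule continuous_on_tendsto_compose[OF Fc[OF \<omega>, of m] limq])
    show "m \<in> {s..m}" by (simp add: m_def)
    show "\<forall>\<^sub>F k in sequentially. q k u \<in> {s..m}" using qb qs by auto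
  qed (simp add: m_def)
  then show "(\<lambda>k. F (q k (fst p)) (snd p)) \<longlonglongrightarrow> F (max (fst p) s) (snd p)"
    by (simp add: pu m_def)
qed

lemma glue:
  fixes b :: "real \<Rightarrow> 'd::euclidean_space \<Rightarrow> 'd" and P Q Y wp Hs :: "real \<Rightarrow> 'd"
  assumes st: "s \<le> t" and lam: "0 \<le> lam"
    and mono: "\<And>v x y. (x - y) \<bullet> (b v x - b v y) \<le> - lam * (norm (x - y))^2"
    and lip: "\<And>v x y. norm (b v x - b v y) \<le> L * norm (x - y)"
    and bc: "continuous_on UNIV (\<lambda>p. b (fst p) (snd p))"
    and Pi: "(\<lambda>v. b v (P v)) integrable_on {s..t}"
    and Psol: "\<And>u. u \<in> {s..t} \<Longrightarrow> P u = x + integral {s..u} (\<lambda>v. b v (P v)) + (wp u - wp s)"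
    and Yi: "Y integrable_on {s..t}"
    and Qsol: "\<And>u. u \<in> {s..t} \<Longrightarrow> Q u = x + integral {s..u} Y + (wp u - wp s)"
    and wc: "continuous_on {s..t} wp"
    and Hsm: "Hs \<in> borel_measurable (restrict_space lborel {s..})"
    and Hs: "\<And>u. s \<le> u \<Longrightarrow> Hs u = b u (Q u) - Y u"
  shows "ennreal (norm (P t - Q t)) \<le> (\<integral>\<^sup>+u. ennreal (exp (- lam * (t - u)) * norm (b u (Q u) - Y u)) * indicator {s..t} u \<partial>lborel)"
proof -
  define h where "h u = b u (Q u) - Y u" for u
  define K where "K = (\<integral>\<^sup>+u. ennreal (exp (- lam * (t - u)) * norm (h u)) * indicator {s..t} u \<partial>lborel)"
  show ?thesis
  proof (cases "K = \<infinity>")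
    case True
    then show ?thesis by (simp add: K_def h_def)
  next
    case False
    have hl: "(\<lambda>u. if u \<in> {s..} then Hs u else 0) \<in> borel_measurable lborel"
      using measurable_restrict_space_iff[of "{s..}" lborel 0 borel Hs] Hsm by simp
    define hind where "hind u = indicator {s..t} u *\<^sub>R h u" for u
    have hind_eq: "hind = (\<lambda>u. indicator {s..t} u *\<^sub>R (if u \<in> {s..} then Hs u else 0))"
      by (auto simp: fun_eq_iff hind_def indicator_def Hs h_def)
    have hindm: "hind \<in> borel_measurable lborel" unfolding hind_eq using hl by measurable
    have meq: "(\<lambda>u. ennreal (exp (- lam * (t - u)) * norm (h u)) * indicator {s..t} u) = (\<lambda>u. ennreal (exp (- lam * (t - u)) * norm (hind u)))"
      by (auto simp: fun_eq_iff indicator_def hind_def)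
    have gm: "(\<lambda>u. ennreal (exp (- lam * (t - u)) * norm (h u)) * indicator {s..t} u) \<in> borel_measurable lborel"
      unfolding meq using hindm by measurable
    have "(\<integral>\<^sup>+u. ennreal (norm (hind u)) \<partial>lborel) \<le> (\<integral>\<^sup>+u. ennreal (exp (lam * (t - s))) * (ennreal (exp (- lam * (t - u)) * norm (h u)) * indicator {s..t} u) \<partial>lborel)"
    proof (rule nn_integral_mono)
      fix u :: real
      show "ennreal (norm (hind u)) \<le> ennreal (exp (lam * (t - s))) * (ennreal (exp (- lam * (t - u)) * norm (h u)) * indicator {s..t} u)"
      proof (cases "u \<in> {s..t}")
        case True
        have "0 \<le> lam * (t - s) + - lam * (t - u)" using True lam by (simp add: algebra_simps mult_left_mono)
        then have "1 \<le> exp (lam * (t - s)) * exp (- lam * (t - u))" by (simp add: mult_exp_exp)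
        then have "norm (h u) \<le> exp (lam * (t - s)) * exp (- lam * (t - u)) * norm (h u)"
          using mult_right_mono[of 1 _ "norm (h u)"] by simp
        then show ?thesis using True by (simp add: hind_def ennreal_mult[symmetric] mult.assoc)
      qed (simp add: hind_def)
    qed
    also have "\<dots> = ennreal (exp (lam * (t - s))) * K"
      unfolding K_def using gm by (rule nn_integral_cmult)
    also have "\<dots> < \<infinity>" using False by (simp add: ennreal_mult_less_top less_top)
    finally have fin: "(\<integral>\<^sup>+u. ennreal (norm (hind u)) \<partial>lborel) < \<infinity>" .
    have "integrable lborel hind" using hindm fin by (simp add: integrable_iff_bounded)
    then have "integrable lebesgue hind" using hindm by (simp add: integrable_completion)
    then have hab: "h absolutely_integrable_on {s..t}" unfolding set_integrable_def hind_def[abs_def] .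
    have heq: "h = (\<lambda>v. b v (Q v) - Y v)" by (simp add: fun_eq_iff h_def)
    have "norm (P t - Q t) \<le> integral {s..t} (\<lambda>v. exp (- lam * (t - v)) * norm (h v))"
      unfolding h_def by (rule pathwise[OF st lam mono lip bc Pi Psol Yi Qsol wc hab[unfolded heq]])
    moreover have gi: "(\<lambda>v. exp (- lam * (t - v)) * norm (h v)) integrable_on {s..t}"
    proof -
      have "(\<lambda>v. exp (- lam * (t - v)) * norm (h v)) absolutely_integrable_on {s..t}"
      proof (rule absolutely_integrable_bounded_measurable_product_real)
        show "(\<lambda>v. exp (- lam * (t - v))) \<in> borel_measurable (lebesgue_on {s..t})"
          by (intro continuous_imp_measurable_on_sets_lebesgue continuous_intros) auto
        show "{s..t} \<in> sets lebesgue" by simp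
        show "bounded ((\<lambda>v. exp (- lam * (t - v))) ` {s..t})"
          by (intro compact_imp_bounded compact_continuous_image continuous_intros) auto
        show "(\<lambda>v. norm (h v)) absolutely_integrable_on {s..t}"
          using absolutely_integrable_norm[OF hab] by (simp add: o_def)
      qed
      then show ?thesis using set_lebesgue_integral_eq_integral(1) by blast
    qed
    have "K = ennreal (integral {s..t} (\<lambda>v. exp (- lam * (t - v)) * norm (h v)))"
      unfolding K_def by (rule nn_integral_has_integral_lebesgue') (use gi in auto)
    ultimately show ?thesis unfolding K_def h_def by (metis ennreal_leI)
  qed
qed

theorem proposition4p3:
  fixes M :: "'a measure"
    and W :: "real \<Rightarrow> 'a \<Rightarrow> 'd::euclidean_space"
    and b :: "real \<Rightarrow> 'd \<Rightarrow> 'd"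
    and lamA :: real
    and s :: real and x :: 'd
    and X Xb Y :: "real \<Rightarrow> 'a \<Rightarrow> 'd"
    and n :: ennreal and t :: real
  assumes BM: "brownian_motion M W"
    and b_C3: "C3_bounded_derivs b"
    and b_smooth_t: "smooth_in_time b"
    and T2: "condition_T2 b lamA"
    and lambda_pos: "lamA > 0"
    and s_nonneg: "0 \<le> s"
    and X_meas: "\<And>u. X u \<in> borel_measurable M"
    and X_sol: "AE \<omega> in M. \<forall>u\<ge>s. (\<lambda>v. b v (X v \<omega>)) integrable_on {s..u} \<and>
                  X u \<omega> = x + integral {s..u} (\<lambda>v. b v (X v \<omega>)) + (W u \<omega> - W s \<omega>)"
    and Y_adapted: "\<And>u. u \<ge> s \<Longrightarrow> Y u \<in> borel_measurable (natural_filtration M W u)"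
    and Y_jointly_meas: "(\<lambda>(u, \<omega>). Y u \<omega>) \<in> borel_measurable (restrict_space lborel {s..} \<Otimes>\<^sub>M M)"
    and Xb_meas: "\<And>u. Xb u \<in> borel_measurable M"
    and Xb_sol: "AE \<omega> in M. \<forall>u\<ge>s. (\<lambda>v. Y v \<omega>) integrable_on {s..u} \<and>
                  Xb u \<omega> = x + integral {s..u} (\<lambda>v. Y v \<omega>) + (W u \<omega> - W s \<omega>)"
    and n_ge: "1 \<le> n"
    and st: "s \<le> t"
  shows "Lp_norm M n (\<lambda>\<omega>. X t \<omega> - Xb t \<omega>)
           \<le> (\<integral>\<^sup>+ u \<in> {s..t}. ennreal (exp (- lamA * (t - u)))
                  * Lp_norm M n (\<lambda>\<omega>. b u (Xb u \<omega>) - Y u \<omega>) \<partial>lborel)"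
proof -
  have Mp: "prob_space M" and Wm: "\<And>u. W u \<in> borel_measurable M"
    and Wc: "AE \<omega> in M. continuous_on {0..} (\<lambda>t. W t \<omega>)"
    using BM by (simp_all add: brownian_motion_def)
  obtain C where C0: "0 \<le> C" and lip: "\<And>v x y. norm (b v x - b v y) \<le> C * norm (x - y)"
    using lip_from_C3[OF b_C3] by blast
  have bc: "continuous_on UNIV (\<lambda>p. b (fst p) (snd p))" by (rule cont_b[OF lip C0 b_smooth_t])
  have mono: "\<And>v x y. (x - y) \<bullet> (b v x - b v y) \<le> - lamA * (norm (x - y))^2"
    by (rule mono_from_T2[OF T2])
  have lam0: "0 \<le> lamA" using lambda_pos by simp
  define good where "good \<omega> \<longleftrightarrow> (\<forall>u\<ge>s. (\<lambda>v. b v (X v \<omega>)) integrable_on {s..u} \<and>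
                  X u \<omega> = x + integral {s..u} (\<lambda>v. b v (X v \<omega>)) + (W u \<omega> - W s \<omega>)) \<and>
      (\<forall>u\<ge>s. (\<lambda>v. Y v \<omega>) integrable_on {s..u} \<and>
                  Xb u \<omega> = x + integral {s..u} (\<lambda>v. Y v \<omega>) + (W u \<omega> - W s \<omega>)) \<and>
      continuous_on {0..} (\<lambda>t. W t \<omega>)" for \<omega>
  have "AE \<omega> in M. good \<omega>" using X_sol Xb_sol Wc by eventually_elim (simp add: good_def)
  then obtain N where N: "{\<omega> \<in> space M. \<not> good \<omega>} \<subseteq> N" "emeasure M N = 0" "N \<in> sets M"
    by (rule AE_E)
  have AEN: "AE \<omega> in M. \<omega> \<notin> N" using N by (intro AE_not_in) (simp add: null_sets_def)
  define F where "F v \<omega> = (if \<omega> \<in> N then 0 else Xb v \<omega>)" for v \<omega>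
  have Fm: "F v \<in> borel_measurable M" for v unfolding F_def using Xb_meas N(3) by measurable
  have goodI: "good \<omega>" if "\<omega> \<in> space M" "\<omega> \<notin> N" for \<omega> using N(1) that by blast
  have Xbc: "continuous_on {s..u} (\<lambda>v. Xb v \<omega>)" if "good \<omega>" "s \<le> u" for \<omega> u
  proof -
    have gi: "(\<lambda>v. Y v \<omega>) integrable_on {s..u}" using that by (simp add: good_def)
    have wc: "continuous_on {s..u} (\<lambda>v. W v \<omega>)"
      using that s_nonneg by (auto simp: good_def intro: continuous_on_subset)
    have "continuous_on {s..u} (\<lambda>v. x + integral {s..v} (\<lambda>v. Y v \<omega>) + (W v \<omega> - W s \<omega>))"
      by (intro continuous_intros indefinite_integral_continuous_1 gi wc)
    then show ?thesis by (rule continuous_on_eq) (use that in \<open>simp add: good_def\<close>)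
  qed
  have Fc: "continuous_on {s..u} (\<lambda>v. F v \<omega>)" if "\<omega> \<in> space M" "s \<le> u" for \<omega> u
  proof (cases "\<omega> \<in> N")
    case True then show ?thesis by (simp add: F_def)
  next
    case False then show ?thesis using Xbc[OF goodI[OF that(1) False] that(2)] by (simp add: F_def)
  qed
  have XbJ: "(\<lambda>p. F (max (fst p) s) (snd p)) \<in> borel_measurable (lborel \<Otimes>\<^sub>M M)"
    by (rule cara[OF Fm Fc])
  define S where "S = restrict_space lborel {s..}"
  have Ssf: "sigma_finite_measure S" unfolding S_def
    by (rule sigma_finite_measure_restrict_space) (auto intro: lborel.sigma_finite_measure_axioms)
  have idS: "(\<lambda>u. u) \<in> measurable S lborel" unfolding S_def by (rule measurable_restrict_space1) simp
  have fstm: "fst \<in> measurable (S \<Otimes>\<^sub>M M) lborel" using measurable_compose[OF measurable_fst idS] by simp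
  have idm: "(\<lambda>p. p) \<in> measurable (S \<Otimes>\<^sub>M M) (lborel \<Otimes>\<^sub>M M)"
    using measurable_Pair[OF fstm measurable_snd] by simp
  have XbJ': "(\<lambda>p. F (max (fst p) s) (snd p)) \<in> borel_measurable (S \<Otimes>\<^sub>M M)"
    using measurable_compose[OF idm XbJ] by simp
  define H where "H u \<omega> = b u (F (max u s) \<omega>) - Y u \<omega>" for u \<omega>
  have Hm: "(\<lambda>(u, \<omega>). H u \<omega>) \<in> borel_measurable (S \<Otimes>\<^sub>M M)"
  proof -
    have b1: "(\<lambda>p. b (fst p) (F (max (fst p) s) (snd p))) \<in> borel_measurable (S \<Otimes>\<^sub>M M)"
      by (rule borel_measurable_continuous_Pair[OF _ XbJ' bc]) (use fstm in simp)
    have Y1: "(\<lambda>p. Y (fst p) (snd p)) \<in> borel_measurable (S \<Otimes>\<^sub>M M)"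
      using Y_jointly_meas unfolding S_def by (simp add: case_prod_beta)
    have "(\<lambda>p. b (fst p) (F (max (fst p) s) (snd p)) - Y (fst p) (snd p)) \<in> borel_measurable (S \<Otimes>\<^sub>M M)"
      using b1 Y1 by (rule borel_measurable_diff)
    then show ?thesis by (simp add: H_def case_prod_beta)
  qed
  define G where "G u \<omega> = norm (H u \<omega>)" for u \<omega>
  have Gm: "(\<lambda>(u, \<omega>). G u \<omega>) \<in> borel_measurable (S \<Otimes>\<^sub>M M)"
    unfolding G_def using Hm by (simp add: case_prod_beta) measurable
  define w where "w u = exp (- lamA * (t - u)) * indicator {s..t} u" for u :: real
  have wm: "w \<in> borel_measurable S"
  proof -
    have "w \<in> borel_measurable lborel" unfolding w_def by measurable
    then show ?thesis unfolding S_def by (rule measurable_restrict_space1)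
  qed
  define Z where "Z \<omega> = norm (X t \<omega> - Xb t \<omega>)" for \<omega>
  have Zm: "Z \<in> borel_measurable M" unfolding Z_def using X_meas Xb_meas by measurable
  have HXb: "H u \<omega> = b u (Xb u \<omega>) - Y u \<omega>" if "\<omega> \<notin> N" "s \<le> u" for u \<omega>
    using that by (simp add: H_def F_def max_def)
  have Sint: "(\<integral>\<^sup>+u. f u \<partial>S) = (\<integral>\<^sup>+u. f u * indicator {s..} u \<partial>lborel)" for f
    unfolding S_def by (rule nn_integral_restrict_space) simp
  have bound: "AE \<omega> in M. ennreal (Z \<omega>) \<le> (\<integral>\<^sup>+u. ennreal (w u * G u \<omega>) \<partial>S)"
    using AEN AE_space
  proof eventually_elim
    case (elim \<omega>)
    then have om: "\<omega> \<in> space M" "\<omega> \<notin> N" by auto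
    have g: "good \<omega>" by (rule goodI[OF om])
    have Hsec: "(\<lambda>u. H u \<omega>) \<in> borel_measurable (restrict_space lborel {s..})"
      using measurable_Pair1[OF Hm om(1)] by (simp add: S_def)
    have "ennreal (norm (X t \<omega> - Xb t \<omega>)) \<le> (\<integral>\<^sup>+u. ennreal (exp (- lamA * (t - u)) * norm (b u (Xb u \<omega>) - Y u \<omega>)) * indicator {s..t} u \<partial>lborel)"
    proof (rule glue[OF st lam0 mono lip bc, where P = "\<lambda>v. X v \<omega>" and Q = "\<lambda>v. Xb v \<omega>" and Y = "\<lambda>v. Y v \<omega>" and wp = "\<lambda>v. W v \<omega>" and x = x and Hs = "\<lambda>u. H u \<omega>"])
      show "(\<lambda>v. b v (X v \<omega>)) integrable_on {s..t}" using g st by (simp add: good_def)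
      show "X u \<omega> = x + integral {s..u} (\<lambda>v. b v (X v \<omega>)) + (W u \<omega> - W s \<omega>)" if "u \<in> {s..t}" for u
        using g that by (simp add: good_def)
      show "(\<lambda>v. Y v \<omega>) integrable_on {s..t}" using g st by (simp add: good_def)
      show "Xb u \<omega> = x + integral {s..u} (\<lambda>v. Y v \<omega>) + (W u \<omega> - W s \<omega>)" if "u \<in> {s..t}" for u
        using g that by (simp add: good_def)
      show "continuous_on {s..t} (\<lambda>v. W v \<omega>)"
        using g s_nonneg by (auto simp: good_def intro: continuous_on_subset)
      show "(\<lambda>u. H u \<omega>) \<in> borel_measurable (restrict_space lborel {s..})" by (rule Hsec)
      show "H u \<omega> = b u (Xb u \<omega>) - Y u \<omega>" if "s \<le> u" for u using HXb[OF om(2) that] .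
    qed
    also have "\<dots> = (\<integral>\<^sup>+u. ennreal (w u * G u \<omega>) \<partial>S)"
      unfolding Sint
      by (intro nn_integral_cong) (auto simp: indicator_def w_def G_def HXb[OF om(2)])
    finally show ?case by (simp add: Z_def)
  qed
  have main: "Lp_norm M n Z \<le> (\<integral>\<^sup>+u. ennreal (w u) * Lp_norm M n (G u) \<partial>S)"
    by (rule main_ineq[OF Mp Ssf Zm _ Gm _ wm _ bound n_ge]) (auto simp: Z_def G_def w_def)
  have lhs: "Lp_norm M n Z = Lp_norm M n (\<lambda>\<omega>. X t \<omega> - Xb t \<omega>)"
    unfolding Z_def by (rule Lp_norm_norm)
  have rhs: "(\<integral>\<^sup>+u. ennreal (w u) * Lp_norm M n (G u) \<partial>S)
     = (\<integral>\<^sup>+ u \<in> {s..t}. ennreal (exp (- lamA * (t - u))) * Lp_norm M n (\<lambda>\<omega>. b u (Xb u \<omega>) - Y u \<omega>) \<partial>lborel)"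
    unfolding Sint
  proof (intro nn_integral_cong)
    fix u :: real
    show "ennreal (w u) * Lp_norm M n (G u) * indicator {s..} u =
         ennreal (exp (- lamA * (t - u))) * Lp_norm M n (\<lambda>\<omega>. b u (Xb u \<omega>) - Y u \<omega>) * indicator {s..t} u"
    proof (cases "u \<in> {s..t}")
      case True
      have uS: "u \<in> space S" using True by (simp add: S_def)
      have Hu: "H u \<in> borel_measurable M" using measurable_Pair2[OF Hm uS] by simp
      have bu: "continuous_on UNIV (b u)"
        using continuous_on_compose2[OF bc continuous_on_Pair[OF continuous_on_const continuous_on_id, of UNIV u]] by simp
      have hu: "(\<lambda>\<omega>. b u (Xb u \<omega>) - Y u \<omega>) \<in> borel_measurable M"
      proof (rule borel_measurable_diff)
        show "(\<lambda>\<omega>. b u (Xb u \<omega>)) \<in> borel_measurable M"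
          by (intro measurable_compose[OF Xb_meas] borel_measurable_continuous_onI bu)
        show "Y u \<in> borel_measurable M" using nat_filt_meas[OF Wm Y_adapted] True by simp
      qed
      have "Lp_norm M n (G u) = Lp_norm M n (H u)" unfolding G_def by (rule Lp_norm_norm)
      also have "\<dots> = Lp_norm M n (\<lambda>\<omega>. b u (Xb u \<omega>) - Y u \<omega>)"
        by (rule Lp_norm_cong_AE[OF Hu hu]) (use AEN True in \<open>auto elim!: eventually_mono simp: HXb\<close>)
      finally show ?thesis using True by (simp add: w_def)
    qed (auto simp: w_def indicator_def)
  qed
  show ?thesis using main lhs rhs by simp
qed

end
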